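(* Let $\mathcal{X},\mathcal{Y}$ be $\mathbb{F}$-linear locally convex spaces with systems of seminorms $\{\|\cdot\|_\alpha\}_{\alpha\in\aleph}$ and $\{\|\cdot\|_\beta\}_{\beta\in\beth}$, and let $\{\operatorname{T}_\epsilon\}_{\epsilon\in(0,1)}$ be a net of continuous linear operators $\mathcal{X}\to\mathcal{Y}$. Suppose that for every $\beta\in\beth$ there exist $\ell_\beta\in\Upsilon$ and a finite set $A_\beta\subset\aleph$ such that $\varsigma_{\ell_\beta}(\epsilon)\|\operatorname{T}_\epsilon\|_{\beta,A_\beta}=o(1)$ as $\epsilon\to0$, where $$\|\operatorname{T}_\epsilon\|_{\beta,A_\beta}=\sup\{\|\operatorname{T}_\epsilon h\|_\beta:\ h\in\mathcal{X},\ \max_{\alpha\in A_\beta}\|h\|_\alpha\le1\}.$$ Then $\operatorname{T}[h_\epsilon]_{\epsilon\in(0,1)}=[\operatorname{T}_\epsilon h_\epsilon]_{\epsilon\in(0,1)}$ is a well-defined $\widetilde{\mathbb{F}}^\mho$-linear map $\mathcal{G}^\mho(\mathcal{X})\to\mathcal{G}^\mho(\mathcal{Y})$ which is continuous for the $\mho$-sharp topologies.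
   Context: $\mathbb{F}\in\{\mathbb{R},\mathbb{C}\}$. An asymptotic scale is a family $\mho=\{\varsigma_\ell\}_{\ell\in\Upsilon}\subset C((0,1),\mathbb{R}_+)$ indexed by a non-empty directed set $(\Upsilon,\prec)$, each $\varsigma_\ell$ increasing in a neighbourhood of $0$, such that (i) $\ell\prec\jmath$ implies $\varsigma_\ell(\epsilon)=o(\varsigma_\jmath(\epsilon))$ as $\epsilon\to0$, and (ii) for all $\ell,\jmath\in\Upsilon$ there is $\hbar\in\Upsilon$ with $\varsigma_\hbar(\epsilon)=o(\varsigma_\ell(\epsilon)\varsigma_\jmath(\epsilon))$ as $\epsilon\to0$. For a locally convex space $\mathcal{X}$ with seminorms $\{\|\cdot\|_\alpha\}_{\alpha\in\aleph}$: a net $\{h_\epsilon\}_{\epsilon\in(0,1)}\subset\mathcal{X}$ is $\mho$-moderate if for every $\alpha$ there is $\ell_\alpha\in\Upsilon$ with $\varsigma_{\ell_\alpha}(\epsilon)\|h_\epsilon\|_\alpha=o(1)$; it is $\mho$-negligible if $\|h_\epsilon\|_\alpha=o(\varsigma_\ell(\epsilon))$ for all $\alpha\in\aleph$, $\ell\in\Upsilon$. $\mathcal{G}^\mho(\mathcal{X})=\mathcal{M}^\mho(\mathcal{X})/\mathcal{N}^\mho(\mathcal{X})$ (moderate nets modulo negligible nets), with classes written $[h_\epsilon]_{\epsilon\in(0,1)}$; $\widetilde{\mathbb{F}}^\mho=\mathcal{G}^\mho(\mathbb{F})$ is the ring of generalised scalars (componentwise product), and $\mathcal{G}^\mho(\mathcal{X})$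 is an $\widetilde{\mathbb{F}}^\mho$-module under componentwise action. The $\mho$-sharp topology on $\mathcal{G}^\mho(\mathcal{X})$ has as a basis of neighbourhoods of $0$ the sets $U_{\alpha,\ell}=\{[h_\epsilon]:\|h_\epsilon\|_\alpha=o(\varsigma_\ell(\epsilon))\text{ as }\epsilon\to0\}$, $\alpha\in\aleph$, $\ell\in\Upsilon$. *)

theory Defs
  imports "HOL-Analysis.Analysis" "HOL-Library.Landau_Symbols"
begin

text \<open>Asymptotic scale: a family sigma indexed by a directed set (relation prec).
  Nets are functions real => X; only the values on (0,1) matter, limits are at_right 0.\<close>

definition asymptotic_scale :: "('l \<Rightarrow> 'l \<Rightarrow> bool) \<Rightarrow> ('l \<Rightarrow> real \<Rightarrow> real) \<Rightarrow> bool" where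
  "asymptotic_scale prec \<sigma> \<longleftrightarrow>
     (\<forall>a b c. prec a b \<longrightarrow> prec b c \<longrightarrow> prec a c) \<and>
     (\<forall>a b. \<exists>c. prec a c \<and> prec b c) \<and>
     (\<forall>l. continuous_on {0<..<1} (\<sigma> l) \<and> (\<forall>e\<in>{0<..<1}. \<sigma> l e > 0) \<and>
          (\<exists>d. 0 < d \<and> d \<le> 1 \<and> mono_on {0<..<d} (\<sigma> l))) \<and>
     (\<forall>l j. prec l j \<longrightarrow> \<sigma> l \<in> o[at_right 0](\<sigma> j)) \<and>
     (\<forall>l j. \<exists>h. \<sigma> h \<in> o[at_right 0](\<lambda>e. \<sigma> l e * \<sigma> j e))"

definition seminorm_on :: "('f::real_normed_field \<Rightarrow> 'x::ab_group_add \<Rightarrow> 'x) \<Rightarrow> ('x \<Rightarrow> real) \<Rightarrow> bool" where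
  "seminorm_on sc p \<longleftrightarrow> (\<forall>x y c. 0 \<le> p x \<and> p (x + y) \<le> p x + p y \<and> p (sc c x) = norm c * p x)"

definition lcs :: "('f::real_normed_field \<Rightarrow> 'x::ab_group_add \<Rightarrow> 'x) \<Rightarrow> ('a \<Rightarrow> 'x \<Rightarrow> real) \<Rightarrow> bool" where
  "lcs sc p \<longleftrightarrow> Vector_Spaces.vector_space sc \<and> (\<forall>a. seminorm_on sc (p a))"

definition lc_top :: "('a \<Rightarrow> 'x::ab_group_add \<Rightarrow> real) \<Rightarrow> 'x topology" where
  "lc_top p = topology_generated_by
     {{y. \<forall>a\<in>A. p a (y - x) < r} | x A r. finite A \<and> 0 < r}"

definition moderate :: "('a \<Rightarrow> 'x \<Rightarrow> real) \<Rightarrow> ('l \<Rightarrow> real \<Rightarrow> real) \<Rightarrow> (real \<Rightarrow> 'x) \<Rightarrow> bool" where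
  "moderate p \<sigma> h \<longleftrightarrow> (\<forall>a. \<exists>l. (\<lambda>e. \<sigma> l e * p a (h e)) \<in> o[at_right 0](\<lambda>_. 1))"

definition negligible :: "('a \<Rightarrow> 'x \<Rightarrow> real) \<Rightarrow> ('l \<Rightarrow> real \<Rightarrow> real) \<Rightarrow> (real \<Rightarrow> 'x) \<Rightarrow> bool" where
  "negligible p \<sigma> h \<longleftrightarrow> (\<forall>a l. (\<lambda>e. p a (h e)) \<in> o[at_right 0](\<sigma> l))"

definition gclass :: "('a \<Rightarrow> 'x::ab_group_add \<Rightarrow> real) \<Rightarrow> ('l \<Rightarrow> real \<Rightarrow> real) \<Rightarrow> (real \<Rightarrow> 'x) \<Rightarrow> (real \<Rightarrow> 'x) set" where
  "gclass p \<sigma> h = {g. moderate p \<sigma> g \<and> negligible p \<sigma> (\<lambda>e. g e - h e)}"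

text \<open>The space G(X) = M(X)/N(X), as the set of classes of moderate nets.\<close>
definition gspace :: "('a \<Rightarrow> 'x::ab_group_add \<Rightarrow> real) \<Rightarrow> ('l \<Rightarrow> real \<Rightarrow> real) \<Rightarrow> (real \<Rightarrow> 'x) set set" where
  "gspace p \<sigma> = gclass p \<sigma> ` {h. moderate p \<sigma> h}"

definition rep :: "(real \<Rightarrow> 'x) set \<Rightarrow> real \<Rightarrow> 'x" where
  "rep C = (SOME h. h \<in> C)"

definition gscalars :: "('l \<Rightarrow> real \<Rightarrow> real) \<Rightarrow> (real \<Rightarrow> 'f::real_normed_field) set set" where
  "gscalars \<sigma> = gspace (\<lambda>_::unit. norm) \<sigma>"

definition gadd :: "('a \<Rightarrow> 'x::ab_group_add \<Rightarrow> real) \<Rightarrow> ('l \<Rightarrow> real \<Rightarrow> real) \<Rightarrow>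
    (real \<Rightarrow> 'x) set \<Rightarrow> (real \<Rightarrow> 'x) set \<Rightarrow> (real \<Rightarrow> 'x) set" where
  "gadd p \<sigma> C D = gclass p \<sigma> (\<lambda>e. rep C e + rep D e)"

definition gscale :: "('f \<Rightarrow> 'x \<Rightarrow> 'x) \<Rightarrow> ('a \<Rightarrow> 'x::ab_group_add \<Rightarrow> real) \<Rightarrow> ('l \<Rightarrow> real \<Rightarrow> real) \<Rightarrow>
    (real \<Rightarrow> 'f) set \<Rightarrow> (real \<Rightarrow> 'x) set \<Rightarrow> (real \<Rightarrow> 'x) set" where
  "gscale sc p \<sigma> c C = gclass p \<sigma> (\<lambda>e. sc (rep c e) (rep C e))"

text \<open>The sharp topology: generated by the translates C + U_{a,l} of the basic neighbourhoods of 0.\<close>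
definition sharp_nbhd :: "('a \<Rightarrow> 'x::ab_group_add \<Rightarrow> real) \<Rightarrow> ('l \<Rightarrow> real \<Rightarrow> real) \<Rightarrow>
    (real \<Rightarrow> 'x) set \<Rightarrow> 'a \<Rightarrow> 'l \<Rightarrow> (real \<Rightarrow> 'x) set set" where
  "sharp_nbhd p \<sigma> C a l = {D \<in> gspace p \<sigma>. \<exists>h\<in>C. \<exists>g\<in>D.
       (\<lambda>e. p a (g e - h e)) \<in> o[at_right 0](\<sigma> l)}"

definition sharp_top :: "('a \<Rightarrow> 'x::ab_group_add \<Rightarrow> real) \<Rightarrow> ('l \<Rightarrow> real \<Rightarrow> real) \<Rightarrow> (real \<Rightarrow> 'x) set topology" where
  "sharp_top p \<sigma> = topology_generated_by
     {sharp_nbhd p \<sigma> C a l | C a l. C \<in> gspace p \<sigma>}"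

text \<open>Operator seminorm ||T||_{b,A} (as a real; its finiteness is required separately).\<close>
definition op_seminorm :: "('a \<Rightarrow> 'x \<Rightarrow> real) \<Rightarrow> ('b \<Rightarrow> 'y \<Rightarrow> real) \<Rightarrow> ('x \<Rightarrow> 'y) \<Rightarrow> 'b \<Rightarrow> 'a set \<Rightarrow> real set" where
  "op_seminorm p q T b A = {q b (T h) | h. \<forall>a\<in>A. p a h \<le> 1}"

definition gmap :: "('b \<Rightarrow> 'y::ab_group_add \<Rightarrow> real) \<Rightarrow> ('l \<Rightarrow> real \<Rightarrow> real) \<Rightarrow>
    (real \<Rightarrow> 'x \<Rightarrow> 'y) \<Rightarrow> (real \<Rightarrow> 'x) set \<Rightarrow> (real \<Rightarrow> 'y) set" where
  "gmap q \<sigma> T C = gclass q \<sigma> (\<lambda>e. T e (rep C e))"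

end

theory Submission
  imports Defs
begin



lemma ev01: "eventually (\<lambda>e. e \<in> {0<..<(1::real)}) (at_right 0)"
  unfolding eventually_at_right_field by (intro exI[of _ 1]) auto

lemma sc_pos:
  assumes "asymptotic_scale prec \<sigma>"
  shows "eventually (\<lambda>e. \<sigma> l e > 0) (at_right 0)"
  using ev01 by eventually_elim (use assms in \<open>auto simp: asymptotic_scale_def\<close>)

lemma sc_bdd:
  assumes "asymptotic_scale prec \<sigma>"
  obtains K where "K > 0" "eventually (\<lambda>e. \<sigma> l e \<le> K) (at_right 0)"
proof -
  have "\<exists>d>0. d \<le> 1 \<and> mono_on {0<..<d} (\<sigma> l)"
    using assms unfolding asymptotic_scale_def by blast
  then obtain d where d: "0 < d" "d \<le> 1" "mono_on {0<..<d} (\<sigma> l)" by blast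
  have "eventually (\<lambda>e. \<sigma> l e \<le> max 1 (\<sigma> l (d/2))) (at_right 0)"
    unfolding eventually_at_right_field
  proof (intro exI[of _ "d/2"] conjI allI impI)
    fix y :: real assume "0 < y" "y < d/2"
    then have "\<sigma> l y \<le> \<sigma> l (d/2)" using d by (intro mono_onD[OF d(3)]) auto
    then show "\<sigma> l y \<le> max 1 (\<sigma> l (d/2))" by simp
  qed (use d in auto)
  then show ?thesis using that[of "max 1 (\<sigma> l (d/2))"] by simp
qed

lemma sc_prod:
  assumes "asymptotic_scale prec \<sigma>"
  obtains m where "eventually (\<lambda>e. \<sigma> m e \<le> \<sigma> l e * \<sigma> j e) (at_right 0)"
proof -
  from assms obtain m where m: "\<sigma> m \<in> o[at_right 0](\<lambda>e. \<sigma> l e * \<sigma> j e)"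
    unfolding asymptotic_scale_def by blast
  have "eventually (\<lambda>e. norm (\<sigma> m e) \<le> 1 * norm (\<sigma> l e * \<sigma> j e)) (at_right 0)"
    using landau_o.smallD[OF m, of 1] by simp
  then have "eventually (\<lambda>e. \<sigma> m e \<le> \<sigma> l e * \<sigma> j e) (at_right 0)"
    using sc_pos[OF assms, of l] sc_pos[OF assms, of j]  sc_pos[OF assms, of m]
    by eventually_elim simp
  then show ?thesis by (rule that)
qed

lemma sc_min:
  assumes "asymptotic_scale prec \<sigma>"
  obtains m K where "K \<ge> 1" "eventually (\<lambda>e. \<sigma> m e \<le> K * \<sigma> l e \<and> \<sigma> m e \<le> K * \<sigma> j e) (at_right 0)"
proof -
  obtain m where m: "eventually (\<lambda>e. \<sigma> m e \<le> \<sigma> l e * \<sigma> j e) (at_right 0)"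
    using sc_prod[OF assms] by blast
  obtain Kl where Kl: "Kl > 0" "eventually (\<lambda>e. \<sigma> l e \<le> Kl) (at_right 0)" using sc_bdd[OF assms] by blast
  obtain Kj where Kj: "Kj > 0" "eventually (\<lambda>e. \<sigma> j e \<le> Kj) (at_right 0)" using sc_bdd[OF assms] by blast
  define K where "K = max 1 (max Kl Kj)"
  have "eventually (\<lambda>e. \<sigma> m e \<le> K * \<sigma> l e \<and> \<sigma> m e \<le> K * \<sigma> j e) (at_right 0)"
    using m Kl(2) Kj(2) sc_pos[OF assms, of l] sc_pos[OF assms, of j]
  proof eventually_elim
    case (elim e)
    have "\<sigma> j e * \<sigma> l e \<le> K * \<sigma> l e" using elim by (intro mult_right_mono) (auto simp: K_def)
    moreover have "\<sigma> l e * \<sigma> j e \<le> K * \<sigma> j e" using elim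
      by (intro mult_right_mono) (auto simp: K_def)
    ultimately show ?case using elim(1) by (simp add: mult.commute)
  qed
  then show ?thesis using that[of K] by (simp add: K_def)
qed

lemma sc_min_fin:
  assumes "asymptotic_scale prec \<sigma>" "finite A"
  shows "\<exists>m K. K \<ge> 1 \<and> eventually (\<lambda>e. \<forall>a\<in>A. \<sigma> m e \<le> K * \<sigma> (L a) e) (at_right 0)"
  using assms(2)
proof (induction A rule: finite_induct)
  case empty
  then show ?case by (intro exI[of _ undefined] exI[of _ 1]) auto
next
  case (insert x A)
  then obtain m K where mK: "K \<ge> 1" "eventually (\<lambda>e. \<forall>a\<in>A. \<sigma> m e \<le> K * \<sigma> (L a) e) (at_right 0)"
    by blast
  obtain m' K' where m': "K' \<ge> 1" "eventually (\<lambda>e. \<sigma> m' e \<le> K' * \<sigma> m e \<and> \<sigma> m' e \<le> K' * \<sigma> (L x) e) (at_right 0)"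
    using sc_min[OF assms(1)] by blast
  have "eventually (\<lambda>e. \<forall>a\<in>insert x A. \<sigma> m' e \<le> (K' * K) * \<sigma> (L a) e) (at_right 0)"
    using mK(2) m'(2) sc_pos[OF assms(1), of "L x"]
  proof eventually_elim
    case (elim e)
    have "\<sigma> m' e \<le> (K' * K) * \<sigma> (L x) e"
    proof -
      have "K' * \<sigma> (L x) e \<le> (K' * K) * \<sigma> (L x) e"
        using elim mK(1) m'(1) by (intro mult_right_mono) auto
      then show ?thesis using elim by linarith
    qed
    moreover have "\<sigma> m' e \<le> (K' * K) * \<sigma> (L a) e" if "a \<in> A" for a
    proof -
      have "K' * \<sigma> m e \<le> K' * (K * \<sigma> (L a) e)"
        using elim that m'(1) by (intro mult_left_mono) auto
      then show ?thesis using elim by (simp add: mult.assoc)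
    qed
    ultimately show ?case by auto
  qed
  moreover have "K' * K \<ge> 1" using mK(1) m'(1) by (metis mult_mono' zero_le_one mult_1_left order_trans)
  ultimately show ?case by blast
qed




lemma lcs_module: "lcs sc p \<Longrightarrow> module sc"
  by (simp add: lcs_def module_iff_vector_space)

lemma sn_nonneg: "lcs sc p \<Longrightarrow> 0 \<le> p a x"
  by (auto simp: lcs_def seminorm_on_def)
lemma sn_tri: "lcs sc p \<Longrightarrow> p a (x + y) \<le> p a x + p a y"
  by (auto simp: lcs_def seminorm_on_def)
lemma sn_scale: "lcs sc p \<Longrightarrow> p a (sc c x) = norm c * p a x"
  by (auto simp: lcs_def seminorm_on_def)
lemma sn_zero: "lcs sc p \<Longrightarrow> p a 0 = 0"
  using sn_scale[of sc p a 0 0] module.scale_zero_left[OF lcs_module, of sc p 0] by simp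
lemma sn_neg: "lcs sc p \<Longrightarrow> p a (- x) = p a x"
  using sn_scale[of sc p a "-1" x] module.scale_minus_left[OF lcs_module, of sc p 1 x]
    module.scale_one[OF lcs_module, of sc p x] by simp
lemma sn_diff_sym: "lcs sc p \<Longrightarrow> p a (x - y) = p a (y - x)"
  using sn_neg[of sc p a "y - x"] by simp
lemma sn_diff_tri: "lcs sc p \<Longrightarrow> p a (x - y) \<le> p a (x - z) + p a (z - y)"
  using sn_tri[of sc p a "x - z" "z - y"] by simp

lemma smallo_iff_real:
  fixes f g :: "'a \<Rightarrow> real"
  assumes "eventually (\<lambda>x. g x \<noteq> 0) F"
  shows "f \<in> o[F](g) \<longleftrightarrow> ((\<lambda>x. f x / g x) \<longlongrightarrow> 0) F"
  using smalloI_tendsto[OF _ assms] smalloD_tendsto by blast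

lemma neg_iff:
  assumes "asymptotic_scale prec \<sigma>"
  shows "negligible p \<sigma> n \<longleftrightarrow> (\<forall>a l. ((\<lambda>e. p a (n e) / \<sigma> l e) \<longlongrightarrow> 0) (at_right 0))"
proof -
  have e: "eventually (\<lambda>e. \<sigma> l e \<noteq> 0) (at_right 0)" for l
    using sc_pos[OF assms, of l] by eventually_elim simp
  show ?thesis unfolding negligible_def using smallo_iff_real[OF e] by simp
qed

lemma mod_iff:
  "moderate p \<sigma> h \<longleftrightarrow> (\<forall>a. \<exists>l. ((\<lambda>e. \<sigma> l e * p a (h e)) \<longlongrightarrow> 0) (at_right 0))"
  unfolding moderate_def using smallo_iff_real[of "\<lambda>_. 1" "at_right (0::real)"] by simp

lemma sandwich0:
  fixes f g :: "'a \<Rightarrow> real"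
  assumes "eventually (\<lambda>x. 0 \<le> f x \<and> f x \<le> g x) F" "(g \<longlongrightarrow> 0) F"
  shows "(f \<longlongrightarrow> 0) F"
proof (rule tendsto_sandwich[of "\<lambda>_. 0" f F g])
  show "eventually (\<lambda>x. 0 \<le> f x) F" using assms(1) by eventually_elim simp
  show "eventually (\<lambda>x. f x \<le> g x) F" using assms(1) by eventually_elim simp
qed (use assms in auto)

context
  fixes sc :: "'f::real_normed_field \<Rightarrow> 'x::ab_group_add \<Rightarrow> 'x" and p :: "'a \<Rightarrow> 'x \<Rightarrow> real"
    and prec :: "'l \<Rightarrow> 'l \<Rightarrow> bool" and \<sigma> :: "'l \<Rightarrow> real \<Rightarrow> real"
  assumes S: "asymptotic_scale prec \<sigma>" and L: "lcs sc p"
begin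

lemma neg_cong:
  assumes "negligible p \<sigma> n" "eventually (\<lambda>e. n e = n' e) (at_right 0)"
  shows "negligible p \<sigma> n'"
  unfolding negligible_def
proof (intro allI)
  fix a l
  have "eventually (\<lambda>e. p a (n e) = p a (n' e)) (at_right 0)" using assms(2) by eventually_elim simp
  from landau_o.small.in_cong[OF this, of "\<sigma> l"] assms(1)
  show "(\<lambda>e. p a (n' e)) \<in> o[at_right 0](\<sigma> l)" unfolding negligible_def by blast
qed

lemma neg_add:
  assumes "negligible p \<sigma> n1" "negligible p \<sigma> n2"
  shows "negligible p \<sigma> (\<lambda>e. n1 e + n2 e)"
  unfolding neg_iff[OF S]
proof (intro allI)
  fix a l
  have t: "((\<lambda>e. p a (n1 e) / \<sigma> l e + p a (n2 e) / \<sigma> l e) \<longlongrightarrow> 0) (at_right 0)"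
    using assms unfolding neg_iff[OF S] using tendsto_add_zero by blast
  show "((\<lambda>e. p a (n1 e + n2 e) / \<sigma> l e) \<longlongrightarrow> 0) (at_right 0)"
  proof (rule sandwich0[OF _ t])
    show "\<forall>\<^sub>F x in at_right 0. 0 \<le> p a (n1 x + n2 x) / \<sigma> l x \<and>
       p a (n1 x + n2 x) / \<sigma> l x \<le> p a (n1 x) / \<sigma> l x + p a (n2 x) / \<sigma> l x"
      using sc_pos[OF S, of l]
    proof eventually_elim
      case (elim e)
      then show ?case using sn_nonneg[OF L] sn_tri[OF L, of a "n1 e" "n2 e"]
        by (auto simp: add_divide_distrib[symmetric] divide_right_mono)
    qed
  qed
qed

lemma neg_zero: "negligible p \<sigma> (\<lambda>e. 0)"
  unfolding negligible_def by (simp add: sn_zero[OF L])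

lemma neg_minus:
  assumes "negligible p \<sigma> n" shows "negligible p \<sigma> (\<lambda>e. - n e)"
  using assms unfolding negligible_def by (simp add: sn_neg[OF L])

lemma neg_diff:
  assumes "negligible p \<sigma> n1" "negligible p \<sigma> n2"
  shows "negligible p \<sigma> (\<lambda>e. n1 e - n2 e)"
  using neg_add[OF assms(1) neg_minus[OF assms(2)]] by simp

lemma neg_sym:
  assumes "negligible p \<sigma> (\<lambda>e. g e - h e)" shows "negligible p \<sigma> (\<lambda>e. h e - g e)"
  using neg_minus[OF assms] by simp

lemma neg_trans:
  assumes "negligible p \<sigma> (\<lambda>e. f e - g e)" "negligible p \<sigma> (\<lambda>e. g e - h e)"
  shows "negligible p \<sigma> (\<lambda>e. f e - h e)"
  using neg_add[OF assms] by simp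

lemma neg_scaled:
  assumes "negligible p \<sigma> n"
  shows "((\<lambda>e. \<sigma> l e * p a (n e)) \<longlongrightarrow> 0) (at_right 0)"
proof -
  obtain K where K: "K > 0" "eventually (\<lambda>e. \<sigma> l e \<le> K) (at_right 0)" using sc_bdd[OF S] by blast
  have t: "((\<lambda>e. p a (n e) / \<sigma> l e * (K * K)) \<longlongrightarrow> 0) (at_right 0)"
    using assms unfolding neg_iff[OF S] by (intro tendsto_mult_left_zero) auto
  show ?thesis
  proof (rule sandwich0[OF _ t])
    show "\<forall>\<^sub>F x in at_right 0. 0 \<le> \<sigma> l x * p a (n x) \<and> \<sigma> l x * p a (n x) \<le> p a (n x) / \<sigma> l x * (K * K)"
      using sc_pos[OF S, of l] K(2)
    proof eventually_elim
      case (elim e)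
      have nn: "0 \<le> p a (n e)" by (rule sn_nonneg[OF L])
      have "\<sigma> l e * p a (n e) = p a (n e) / \<sigma> l e * (\<sigma> l e * \<sigma> l e)" using elim by simp
      also have "\<dots> \<le> p a (n e) / \<sigma> l e * (K * K)"
        using elim nn by (intro mult_left_mono mult_mono) auto
      finally show ?case using elim nn by simp
    qed
  qed
qed

lemma neg_imp_mod: "negligible p \<sigma> n \<Longrightarrow> moderate p \<sigma> n"
  unfolding mod_iff using neg_scaled by blast

lemma mod_add:
  assumes "moderate p \<sigma> h1" "moderate p \<sigma> h2"
  shows "moderate p \<sigma> (\<lambda>e. h1 e + h2 e)"
  unfolding mod_iff
proof
  fix a
  obtain l1 where l1: "((\<lambda>e. \<sigma> l1 e * p a (h1 e)) \<longlongrightarrow> 0) (at_right 0)"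
    using assms(1) unfolding mod_iff by blast
  obtain l2 where l2: "((\<lambda>e. \<sigma> l2 e * p a (h2 e)) \<longlongrightarrow> 0) (at_right 0)"
    using assms(2) unfolding mod_iff by blast
  obtain m K where mK: "K \<ge> 1" "eventually (\<lambda>e. \<sigma> m e \<le> K * \<sigma> l1 e \<and> \<sigma> m e \<le> K * \<sigma> l2 e) (at_right 0)"
    using sc_min[OF S] by blast
  have t: "((\<lambda>e. K * (\<sigma> l1 e * p a (h1 e)) + K * (\<sigma> l2 e * p a (h2 e))) \<longlongrightarrow> 0) (at_right 0)"
    using tendsto_add_zero[OF tendsto_mult_right_zero[OF l1] tendsto_mult_right_zero[OF l2]] .
  have "((\<lambda>e. \<sigma> m e * p a (h1 e + h2 e)) \<longlongrightarrow> 0) (at_right 0)"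
  proof (rule sandwich0[OF _ t])
    show "\<forall>\<^sub>F x in at_right 0. 0 \<le> \<sigma> m x * p a (h1 x + h2 x) \<and>
        \<sigma> m x * p a (h1 x + h2 x) \<le> K * (\<sigma> l1 x * p a (h1 x)) + K * (\<sigma> l2 x * p a (h2 x))"
      using mK(2) sc_pos[OF S, of m]
    proof eventually_elim
      case (elim e)
      have n1: "0 \<le> p a (h1 e)" "0 \<le> p a (h2 e)" "0 \<le> p a (h1 e + h2 e)" using sn_nonneg[OF L] by auto
      have "\<sigma> m e * p a (h1 e + h2 e) \<le> \<sigma> m e * (p a (h1 e) + p a (h2 e))"
        using elim sn_tri[OF L] by (intro mult_left_mono) auto
      also have "\<dots> = \<sigma> m e * p a (h1 e) + \<sigma> m e * p a (h2 e)" by (simp add: algebra_simps)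
      also have "\<dots> \<le> (K * \<sigma> l1 e) * p a (h1 e) + (K * \<sigma> l2 e) * p a (h2 e)"
        using elim n1 by (intro add_mono mult_right_mono) auto
      finally have "\<sigma> m e * p a (h1 e + h2 e) \<le> K * (\<sigma> l1 e * p a (h1 e)) + K * (\<sigma> l2 e * p a (h2 e))"
        by (simp only: mult.assoc)
      moreover have "0 \<le> \<sigma> m e * p a (h1 e + h2 e)" using elim n1 by simp
      ultimately show ?case by blast
    qed
  qed
  then show "\<exists>l. ((\<lambda>e. \<sigma> l e * p a (h1 e + h2 e)) \<longlongrightarrow> 0) (at_right 0)" by blast
qed

lemma mod_neg:
  assumes "moderate p \<sigma> h" "negligible p \<sigma> (\<lambda>e. g e - h e)"
  shows "moderate p \<sigma> g"
  using mod_add[OF assms(1) neg_imp_mod[OF assms(2)]] by simp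

lemma mem_gclass: "g \<in> gclass p \<sigma> h \<longleftrightarrow> moderate p \<sigma> g \<and> negligible p \<sigma> (\<lambda>e. g e - h e)"
  by (simp add: gclass_def)

lemma gc_self: "moderate p \<sigma> h \<Longrightarrow> h \<in> gclass p \<sigma> h"
  using neg_zero by (simp add: gclass_def)

lemma gc_eq:
  assumes "negligible p \<sigma> (\<lambda>e. g e - h e)"
  shows "gclass p \<sigma> g = gclass p \<sigma> h"
proof (intro set_eqI iffI)
  fix x assume "x \<in> gclass p \<sigma> g"
  then show "x \<in> gclass p \<sigma> h" unfolding mem_gclass using neg_trans[OF _ assms] by blast
next
  fix x assume "x \<in> gclass p \<sigma> h"
  then show "x \<in> gclass p \<sigma> g" unfolding mem_gclass using neg_trans[OF _ neg_sym[OF assms]] by blast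
qed

lemma rep_in: "C \<noteq> {} \<Longrightarrow> rep C \<in> C"
  unfolding rep_def by (simp add: some_in_eq)

lemma gc_rep:
  assumes "moderate p \<sigma> h"
  shows "moderate p \<sigma> (rep (gclass p \<sigma> h)) \<and> negligible p \<sigma> (\<lambda>e. rep (gclass p \<sigma> h) e - h e)"
proof -
  have "rep (gclass p \<sigma> h) \<in> gclass p \<sigma> h" using rep_in gc_self[OF assms] by blast
  then show ?thesis by (simp add: gclass_def)
qed

lemma gspace_E:
  assumes "C \<in> gspace p \<sigma>"
  shows "moderate p \<sigma> (rep C) \<and> rep C \<in> C \<and> C = gclass p \<sigma> (rep C)"
proof -
  obtain h where h: "moderate p \<sigma> h" "C = gclass p \<sigma> h" using assms by (auto simp: gspace_def)
  have "rep C \<in> C" using rep_in gc_self[OF h(1)] h(2) by blast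
  then have r: "moderate p \<sigma> (rep C)" "negligible p \<sigma> (\<lambda>e. rep C e - h e)"
    using h(2) mem_gclass by blast+
  have "C = gclass p \<sigma> (rep C)" using h(2) gc_eq[OF r(2)] by simp
  then show ?thesis using r \<open>rep C \<in> C\<close> by blast
qed

lemma gclass_in_gspace: "moderate p \<sigma> h \<Longrightarrow> gclass p \<sigma> h \<in> gspace p \<sigma>"
  by (simp add: gspace_def)

end



lemma div_trick:
  fixes X sk sl sj :: real
  assumes "0 \<le> X" "0 < sk" "0 < sl" "0 < sj" "sk \<le> sl * sj"
  shows "X / sj \<le> sl * (X / sk)"
proof -
  have "X * sk \<le> X * (sl * sj)" using assms by (intro mult_left_mono) auto
  then show ?thesis using assms by (simp add: field_simps)
qed

lemma op_bound:
  fixes sX :: "'f::real_normed_field \<Rightarrow> 'x::ab_group_add \<Rightarrow> 'x"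
    and sY :: "'f \<Rightarrow> 'y::ab_group_add \<Rightarrow> 'y"
  assumes X: "lcs sX p" and Y: "lcs sY q" and mh: "module_hom sX sY T"
    and fin: "finite A" and bdd: "bdd_above (op_seminorm p q T b A)"
  shows "0 \<le> Sup (op_seminorm p q T b A) \<and> q b (T x) \<le> Sup (op_seminorm p q T b A) * (\<Sum>a\<in>A. p a x)"
proof -
  define S where "S = Sup (op_seminorm p q T b A)"
  have mem: "q b (T h) \<le> S" if "\<forall>a\<in>A. p a h \<le> 1" for h
    unfolding S_def using that by (intro cSup_upper[OF _ bdd]) (auto simp: op_seminorm_def)
  have T0: "T 0 = 0" using module_hom.zero[OF mh] .
  have S0: "0 \<le> S" using mem[of 0] sn_zero[OF X] sn_zero[OF Y] T0 by simp
  have Ts: "T (sX (of_real r) x) = sY (of_real r) (T x)" for r using module_hom.scale[OF mh] .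
  define s where "s = (\<Sum>a\<in>A. p a x)"
  have s0: "0 \<le> s" unfolding s_def using sn_nonneg[OF X] by (simp add: sum_nonneg)
  have le_s: "p a x \<le> s" if "a \<in> A" for a
    unfolding s_def using that fin sn_nonneg[OF X] by (intro member_le_sum) auto
  have "q b (T x) \<le> S * s"
  proof (cases "s > 0")
    case True
    have "\<forall>a\<in>A. p a (sX (of_real (1/s)) x) \<le> 1"
      using True le_s by (auto simp: sn_scale[OF X] norm_divide field_simps)
    then have "q b (T (sX (of_real (1/s)) x)) \<le> S" by (rule mem)
    moreover have "q b (T (sX (of_real (1/s)) x)) = norm (of_real (1/s) :: 'f) * q b (T x)"
      by (simp only: Ts sn_scale[OF Y])
    moreover have "norm (of_real (1/s) :: 'f) = 1 / s" using True by (simp only: norm_of_real) simp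
    ultimately have "q b (T x) / s \<le> S" by simp
    then show ?thesis using True by (simp add: field_simps)
  next
    case False
    then have "s = 0" using s0 by simp
    then have z: "\<forall>a\<in>A. p a x = 0" unfolding s_def using fin sn_nonneg[OF X]
      by (subst (asm) sum_nonneg_eq_0_iff) auto
    have tq: "t * q b (T x) \<le> S" if "t > 0" for t :: real
    proof -
      have "\<forall>a\<in>A. p a (sX (of_real t) x) \<le> 1" using z by (simp add: sn_scale[OF X])
      then have "q b (T (sX (of_real t) x)) \<le> S" by (rule mem)
      moreover have "q b (T (sX (of_real t) x)) = norm (of_real t :: 'f) * q b (T x)"
        by (simp only: Ts sn_scale[OF Y])
      ultimately show ?thesis using that by simp
    qed
    have "q b (T x) \<le> 0"
    proof (rule ccontr)
      assume "\<not> q b (T x) \<le> 0"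
      then have pos: "q b (T x) > 0" by simp
      have "(S + 1) / q b (T x) * q b (T x) \<le> S" using pos S0 by (intro tq) auto
      then show False using pos by simp
    qed
    then show ?thesis using \<open>s = 0\<close> by simp
  qed
  then show ?thesis using S0 unfolding S_def s_def by simp
qed

context
  fixes sc :: "'f::real_normed_field \<Rightarrow> 'x::ab_group_add \<Rightarrow> 'x" and p :: "'a \<Rightarrow> 'x \<Rightarrow> real"
    and prec :: "'l \<Rightarrow> 'l \<Rightarrow> bool" and \<sigma> :: "'l \<Rightarrow> real \<Rightarrow> real"
  assumes S: "asymptotic_scale prec \<sigma>" and L: "lcs sc p"
begin

lemma mod_scal:
  assumes c: "moderate (\<lambda>_::unit. norm) \<sigma> c" and h: "moderate p \<sigma> h"
  shows "moderate p \<sigma> (\<lambda>e. sc (c e) (h e))"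
  unfolding mod_iff
proof
  fix a
  obtain lc where lc: "((\<lambda>e. \<sigma> lc e * norm (c e)) \<longlongrightarrow> 0) (at_right 0)"
    using c unfolding mod_iff by blast
  obtain lh where lh: "((\<lambda>e. \<sigma> lh e * p a (h e)) \<longlongrightarrow> 0) (at_right 0)"
    using h unfolding mod_iff by blast
  obtain m where m: "eventually (\<lambda>e. \<sigma> m e \<le> \<sigma> lc e * \<sigma> lh e) (at_right 0)"
    using sc_prod[OF S] by blast
  have "((\<lambda>e. \<sigma> m e * p a (sc (c e) (h e))) \<longlongrightarrow> 0) (at_right 0)"
  proof (rule sandwich0[OF _ tendsto_mult_zero[OF lc lh]])
    show "\<forall>\<^sub>F x in at_right 0. 0 \<le> \<sigma> m x * p a (sc (c x) (h x)) \<and>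
      \<sigma> m x * p a (sc (c x) (h x)) \<le> \<sigma> lc x * norm (c x) * (\<sigma> lh x * p a (h x))"
      using m sc_pos[OF S, of m]
    proof eventually_elim
      case (elim e)
      have n: "0 \<le> p a (h e)" "0 \<le> norm (c e)" using sn_nonneg[OF L] by auto
      have "\<sigma> m e * p a (sc (c e) (h e)) = \<sigma> m e * (norm (c e) * p a (h e))" by (simp add: sn_scale[OF L])
      also have "\<dots> \<le> (\<sigma> lc e * \<sigma> lh e) * (norm (c e) * p a (h e))"
        using elim n by (intro mult_right_mono) auto
      also have "\<dots> = \<sigma> lc e * norm (c e) * (\<sigma> lh e * p a (h e))" by (simp add: algebra_simps)
      finally show ?case using elim n sn_nonneg[OF L, of a "sc (c e) (h e)"] by simp
    qed
  qed
  then show "\<exists>l. ((\<lambda>e. \<sigma> l e * p a (sc (c e) (h e))) \<longlongrightarrow> 0) (at_right 0)" by blast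
qed

lemma neg_scal:
  assumes c: "moderate (\<lambda>_::unit. norm) \<sigma> c" and n: "negligible p \<sigma> n"
  shows "negligible p \<sigma> (\<lambda>e. sc (c e) (n e))"
  unfolding neg_iff[OF S]
proof (intro allI)
  fix a j
  obtain lc where lc: "((\<lambda>e. \<sigma> lc e * norm (c e)) \<longlongrightarrow> 0) (at_right 0)"
    using c unfolding mod_iff by blast
  obtain k where k: "eventually (\<lambda>e. \<sigma> k e \<le> \<sigma> lc e * \<sigma> j e) (at_right 0)"
    using sc_prod[OF S] by blast
  have nk: "((\<lambda>e. p a (n e) / \<sigma> k e) \<longlongrightarrow> 0) (at_right 0)" using n unfolding neg_iff[OF S] by blast
  show "((\<lambda>e. p a (sc (c e) (n e)) / \<sigma> j e) \<longlongrightarrow> 0) (at_right 0)"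
  proof (rule sandwich0[OF _ tendsto_mult_zero[OF lc nk]])
    show "\<forall>\<^sub>F x in at_right 0. 0 \<le> p a (sc (c x) (n x)) / \<sigma> j x \<and>
       p a (sc (c x) (n x)) / \<sigma> j x \<le> \<sigma> lc x * norm (c x) * (p a (n x) / \<sigma> k x)"
      using k sc_pos[OF S, of k] sc_pos[OF S, of j] sc_pos[OF S, of lc]
    proof eventually_elim
      case (elim e)
      have n: "0 \<le> p a (n e)" "0 \<le> norm (c e)" using sn_nonneg[OF L] by auto
      have "p a (sc (c e) (n e)) / \<sigma> j e = (norm (c e) * p a (n e)) / \<sigma> j e" by (simp add: sn_scale[OF L])
      also have "\<dots> \<le> \<sigma> lc e * ((norm (c e) * p a (n e)) / \<sigma> k e)"
        using elim n by (intro div_trick) auto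
      also have "\<dots> = \<sigma> lc e * norm (c e) * (p a (n e) / \<sigma> k e)" by simp
      finally show ?case using elim n by (simp add: sn_scale[OF L])
    qed
  qed
qed

end



lemma lcs_scalar: "lcs ((*) :: 'f::real_normed_field \<Rightarrow> 'f \<Rightarrow> 'f) (\<lambda>_::unit. norm)"
  unfolding lcs_def seminorm_on_def
  by (auto simp: Vector_Spaces.vector_space_def algebra_simps norm_mult norm_triangle_ineq)

context
  fixes sc :: "'f::real_normed_field \<Rightarrow> 'x::ab_group_add \<Rightarrow> 'x" and p :: "'a \<Rightarrow> 'x \<Rightarrow> real"
    and prec :: "'l \<Rightarrow> 'l \<Rightarrow> bool" and \<sigma> :: "'l \<Rightarrow> real \<Rightarrow> real"
  assumes S: "asymptotic_scale prec \<sigma>" and L: "lcs sc p"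
begin

lemma small_iff_k: "f \<in> o[at_right 0](\<sigma> k) \<longleftrightarrow> ((\<lambda>e. f e / \<sigma> k e) \<longlongrightarrow> 0) (at_right 0)"
proof -
  have e: "eventually (\<lambda>e. \<sigma> k e \<noteq> 0) (at_right 0)"
    using sc_pos[OF S, of k] by eventually_elim simp
  show ?thesis using smallo_iff_real[OF e] by simp
qed

lemma self_nbhd:
  assumes "C \<in> gspace p \<sigma>" shows "C \<in> sharp_nbhd p \<sigma> C a l"
proof -
  have "rep C \<in> C" using gspace_E[OF S L assms] by blast
  moreover have "(\<lambda>e. p a (rep C e - rep C e)) \<in> o[at_right 0](\<sigma> l)"
    by (simp add: sn_zero[OF L])
  ultimately show ?thesis using assms unfolding sharp_nbhd_def by blast
qed

lemma topspace_sharp: "topspace (sharp_top p \<sigma>) = gspace p \<sigma>"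
  unfolding sharp_top_def topology_generated_by_topspace
proof (intro equalityI subsetI)
  fix C assume "C \<in> \<Union> {sharp_nbhd p \<sigma> C a l |C a l. C \<in> gspace p \<sigma>}"
  then show "C \<in> gspace p \<sigma>" unfolding sharp_nbhd_def by blast
next
  fix C assume "C \<in> gspace p \<sigma>"
  then show "C \<in> \<Union> {sharp_nbhd p \<sigma> C a l |C a l. C \<in> gspace p \<sigma>}"
    using self_nbhd by blast
qed

lemma nbhd_open:
  assumes "C \<in> gspace p \<sigma>" shows "openin (sharp_top p \<sigma>) (sharp_nbhd p \<sigma> C a l)"
  unfolding sharp_top_def by (rule topology_generated_by_Basis) (use assms in blast)

lemma nbhd_close:
  assumes C: "C \<in> gspace p \<sigma>" and D: "D \<in> sharp_nbhd p \<sigma> C a k"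
  shows "((\<lambda>e. p a (rep D e - rep C e) / \<sigma> k e) \<longlongrightarrow> 0) (at_right 0)"
proof -
  have Dg: "D \<in> gspace p \<sigma>" using D unfolding sharp_nbhd_def by blast
  obtain h g where hg: "h \<in> C" "g \<in> D" "(\<lambda>e. p a (g e - h e)) \<in> o[at_right 0](\<sigma> k)"
    using D unfolding sharp_nbhd_def by blast
  have n1: "negligible p \<sigma> (\<lambda>e. g e - rep D e)"
    using hg(2) gspace_E[OF S L Dg] mem_gclass[OF S L] by blast
  have n2: "negligible p \<sigma> (\<lambda>e. h e - rep C e)"
    using hg(1) gspace_E[OF S L C] mem_gclass[OF S L] by blast
  have t: "((\<lambda>e. p a (g e - rep D e) / \<sigma> k e + p a (g e - h e) / \<sigma> k e + p a (h e - rep C e) / \<sigma> k e) \<longlongrightarrow> 0) (at_right 0)"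
    using n1 n2 hg(3) unfolding neg_iff[OF S] small_iff_k
    by (intro tendsto_add_zero) auto
  show ?thesis
  proof (rule sandwich0[OF _ t])
    show "\<forall>\<^sub>F e in at_right 0. 0 \<le> p a (rep D e - rep C e) / \<sigma> k e \<and>
       p a (rep D e - rep C e) / \<sigma> k e \<le> p a (g e - rep D e) / \<sigma> k e + p a (g e - h e) / \<sigma> k e + p a (h e - rep C e) / \<sigma> k e"
      using sc_pos[OF S, of k]
    proof eventually_elim
      case (elim e)
      have "p a (rep D e - rep C e) \<le> p a (rep D e - g e) + p a (g e - rep C e)" by (rule sn_diff_tri[OF L])
      also have "\<dots> \<le> p a (g e - rep D e) + (p a (g e - h e) + p a (h e - rep C e))"
        using sn_diff_tri[OF L, of a "g e" "rep C e" "h e"] sn_diff_sym[OF L, of a "rep D e" "g e"] by simp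
      finally have "p a (rep D e - rep C e) / \<sigma> k e \<le> (p a (g e - rep D e) + p a (g e - h e) + p a (h e - rep C e)) / \<sigma> k e"
        using elim by (intro divide_right_mono) auto
      then show ?case using elim sn_nonneg[OF L] by (simp add: add_divide_distrib)
    qed
  qed
qed

end



context
  fixes sX :: "'f::real_normed_field \<Rightarrow> 'x::ab_group_add \<Rightarrow> 'x"
    and sY :: "'f \<Rightarrow> 'y::ab_group_add \<Rightarrow> 'y"
    and p :: "'a \<Rightarrow> 'x \<Rightarrow> real" and q :: "'b \<Rightarrow> 'y \<Rightarrow> real"
    and prec :: "'l \<Rightarrow> 'l \<Rightarrow> bool" and \<sigma> :: "'l \<Rightarrow> real \<Rightarrow> real"
    and T :: "real \<Rightarrow> 'x \<Rightarrow> 'y"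
  assumes scale: "asymptotic_scale prec \<sigma>"
    and X: "lcs sX p" and Y: "lcs sY q"
    and lin: "\<And>e. e \<in> {0<..<1} \<Longrightarrow> Vector_Spaces.linear sX sY (T e)"
    and growth: "\<forall>b. \<exists>l A. finite A \<and>
        (\<forall>\<^sub>F e in at_right 0. bdd_above (op_seminorm p q (T e) b A)) \<and>
        (\<lambda>e. \<sigma> l e * Sup (op_seminorm p q (T e) b A)) \<in> o[at_right 0](\<lambda>_. 1)"
begin

lemma mh: "e \<in> {0<..<1} \<Longrightarrow> module_hom sX sY (T e)"
  using lin by (simp add: linear_iff_module_hom)

lemma ev_bound:
  "\<exists>l A. finite A \<and> ((\<lambda>e. \<sigma> l e * Sup (op_seminorm p q (T e) b A)) \<longlongrightarrow> 0) (at_right 0) \<and>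
     eventually (\<lambda>e. 0 \<le> Sup (op_seminorm p q (T e) b A) \<and>
        (\<forall>x. q b (T e x) \<le> Sup (op_seminorm p q (T e) b A) * (\<Sum>a\<in>A. p a x))) (at_right 0)"
proof -
  obtain l A where A: "finite A" and bdd: "\<forall>\<^sub>F e in at_right 0. bdd_above (op_seminorm p q (T e) b A)"
    and o: "(\<lambda>e. \<sigma> l e * Sup (op_seminorm p q (T e) b A)) \<in> o[at_right 0](\<lambda>_. 1)"
    using growth by blast
  have lim: "((\<lambda>e. \<sigma> l e * Sup (op_seminorm p q (T e) b A)) \<longlongrightarrow> 0) (at_right 0)"
    using o smallo_iff_real[of "\<lambda>_. 1" "at_right (0::real)"] by simp
  have "eventually (\<lambda>e. 0 \<le> Sup (op_seminorm p q (T e) b A) \<and>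
        (\<forall>x. q b (T e x) \<le> Sup (op_seminorm p q (T e) b A) * (\<Sum>a\<in>A. p a x))) (at_right 0)"
    using bdd ev01
  proof eventually_elim
    case (elim e)
    then show ?case using op_bound[OF X Y mh[OF elim(2)] A elim(1)] by blast
  qed
  then show ?thesis using A lim by blast
qed

lemma T_mod:
  assumes h: "moderate p \<sigma> h"
  shows "moderate q \<sigma> (\<lambda>e. T e (h e))"
  unfolding mod_iff
proof
  fix b
  obtain l A where A: "finite A"
    and lim: "((\<lambda>e. \<sigma> l e * Sup (op_seminorm p q (T e) b A)) \<longlongrightarrow> 0) (at_right 0)"
    and bnd: "eventually (\<lambda>e. 0 \<le> Sup (op_seminorm p q (T e) b A) \<and>
        (\<forall>x. q b (T e x) \<le> Sup (op_seminorm p q (T e) b A) * (\<Sum>a\<in>A. p a x))) (at_right 0)"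
    using ev_bound[of b] by blast
  have "\<forall>a\<in>A. \<exists>la. ((\<lambda>e. \<sigma> la e * p a (h e)) \<longlongrightarrow> 0) (at_right 0)" using h unfolding mod_iff by blast
  then obtain L where L: "\<forall>a\<in>A. ((\<lambda>e. \<sigma> (L a) e * p a (h e)) \<longlongrightarrow> 0) (at_right 0)" by metis
  obtain m0 K where K: "K \<ge> 1" "eventually (\<lambda>e. \<forall>a\<in>A. \<sigma> m0 e \<le> K * \<sigma> (L a) e) (at_right 0)"
    using sc_min_fin[OF scale A] by blast
  obtain m where m: "eventually (\<lambda>e. \<sigma> m e \<le> \<sigma> l e * \<sigma> m0 e) (at_right 0)"
    using sc_prod[OF scale] by blast
  have t: "((\<lambda>e. (\<sigma> l e * Sup (op_seminorm p q (T e) b A)) * (\<Sum>a\<in>A. K * (\<sigma> (L a) e * p a (h e)))) \<longlongrightarrow> 0) (at_right 0)"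
    using L by (intro tendsto_mult_zero[OF lim] tendsto_null_sum tendsto_mult_right_zero) auto
  have "((\<lambda>e. \<sigma> m e * q b (T e (h e))) \<longlongrightarrow> 0) (at_right 0)"
  proof (rule sandwich0[OF _ t])
    show "\<forall>\<^sub>F e in at_right 0. 0 \<le> \<sigma> m e * q b (T e (h e)) \<and>
      \<sigma> m e * q b (T e (h e)) \<le> (\<sigma> l e * Sup (op_seminorm p q (T e) b A)) * (\<Sum>a\<in>A. K * (\<sigma> (L a) e * p a (h e)))"
      using bnd K(2) m sc_pos[OF scale, of m] sc_pos[OF scale, of l] sc_pos[OF scale, of m0]
    proof eventually_elim
      case (elim e)
      define S where "S = Sup (op_seminorm p q (T e) b A)"
      define P where "P = (\<Sum>a\<in>A. p a (h e))"
      have P0: "0 \<le> P" unfolding P_def using sn_nonneg[OF X] by (simp add: sum_nonneg)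
      have S0: "0 \<le> S" using elim unfolding S_def by blast
      have qn: "0 \<le> q b (T e (h e))" using sn_nonneg[OF Y] by blast
      have "\<sigma> m e * q b (T e (h e)) \<le> \<sigma> m e * (S * P)"
        using elim unfolding S_def P_def by (intro mult_left_mono) auto
      also have "\<dots> \<le> (\<sigma> l e * \<sigma> m0 e) * (S * P)"
        using elim S0 P0 by (intro mult_right_mono) auto
      also have "\<dots> = (\<sigma> l e * S) * (\<Sum>a\<in>A. \<sigma> m0 e * p a (h e))"
        unfolding P_def by (simp add: sum_distrib_left ac_simps)
      also have "\<dots> \<le> (\<sigma> l e * S) * (\<Sum>a\<in>A. K * (\<sigma> (L a) e * p a (h e)))"
      proof (intro mult_left_mono sum_mono)
        fix a assume "a \<in> A"
        then have "\<sigma> m0 e * p a (h e) \<le> (K * \<sigma> (L a) e) * p a (h e)"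
          using elim sn_nonneg[OF X] by (intro mult_right_mono) auto
        then show "\<sigma> m0 e * p a (h e) \<le> K * (\<sigma> (L a) e * p a (h e))" by (simp add: mult.assoc)
      qed (use elim S0 in auto)
      finally show ?case using qn elim unfolding S_def by simp
    qed
  qed
  then show "\<exists>m. ((\<lambda>e. \<sigma> m e * q b (T e (h e))) \<longlongrightarrow> 0) (at_right 0)" by blast
qed

lemma T_negk:
  "\<exists>k A. finite A \<and> (\<forall>n. (\<forall>a\<in>A. ((\<lambda>e. p a (n e) / \<sigma> k e) \<longlongrightarrow> 0) (at_right 0)) \<longrightarrow>
      ((\<lambda>e. q b (T e (n e)) / \<sigma> j e) \<longlongrightarrow> 0) (at_right 0))"
proof -
  obtain l A where A: "finite A"
    and lim: "((\<lambda>e. \<sigma> l e * Sup (op_seminorm p q (T e) b A)) \<longlongrightarrow> 0) (at_right 0)"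
    and bnd: "eventually (\<lambda>e. 0 \<le> Sup (op_seminorm p q (T e) b A) \<and>
        (\<forall>x. q b (T e x) \<le> Sup (op_seminorm p q (T e) b A) * (\<Sum>a\<in>A. p a x))) (at_right 0)"
    using ev_bound[of b] by blast
  obtain k where k: "eventually (\<lambda>e. \<sigma> k e \<le> \<sigma> l e * \<sigma> j e) (at_right 0)"
    using sc_prod[OF scale] by blast
  have "((\<lambda>e. q b (T e (n e)) / \<sigma> j e) \<longlongrightarrow> 0) (at_right 0)"
    if n: "\<forall>a\<in>A. ((\<lambda>e. p a (n e) / \<sigma> k e) \<longlongrightarrow> 0) (at_right 0)" for n
  proof -
    have t: "((\<lambda>e. (\<sigma> l e * Sup (op_seminorm p q (T e) b A)) * (\<Sum>a\<in>A. p a (n e) / \<sigma> k e)) \<longlongrightarrow> 0) (at_right 0)"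
      using n by (intro tendsto_mult_zero[OF lim] tendsto_null_sum) auto
    show ?thesis
    proof (rule sandwich0[OF _ t])
      show "\<forall>\<^sub>F e in at_right 0. 0 \<le> q b (T e (n e)) / \<sigma> j e \<and>
          q b (T e (n e)) / \<sigma> j e \<le> (\<sigma> l e * Sup (op_seminorm p q (T e) b A)) * (\<Sum>a\<in>A. p a (n e) / \<sigma> k e)"
        using bnd k sc_pos[OF scale, of k] sc_pos[OF scale, of l] sc_pos[OF scale, of j]
      proof eventually_elim
        case (elim e)
        define S where "S = Sup (op_seminorm p q (T e) b A)"
        define P where "P = (\<Sum>a\<in>A. p a (n e))"
        have P0: "0 \<le> P" unfolding P_def using sn_nonneg[OF X] by (simp add: sum_nonneg)
        have S0: "0 \<le> S" using elim unfolding S_def by blast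
        have qn: "0 \<le> q b (T e (n e))" using sn_nonneg[OF Y] by blast
        have "q b (T e (n e)) / \<sigma> j e \<le> (S * P) / \<sigma> j e"
          using elim unfolding S_def P_def by (intro divide_right_mono) auto
        also have "\<dots> \<le> \<sigma> l e * ((S * P) / \<sigma> k e)"
          using elim S0 P0 by (intro div_trick) auto
        also have "\<dots> = (\<sigma> l e * S) * (\<Sum>a\<in>A. p a (n e) / \<sigma> k e)"
          unfolding P_def by (simp add: sum_divide_distrib[symmetric])
        finally show ?case using qn elim unfolding S_def by simp
      qed
    qed
  qed
  then show ?thesis using A by blast
qed

lemma T_neg:
  assumes "negligible p \<sigma> n"
  shows "negligible q \<sigma> (\<lambda>e. T e (n e))"
  unfolding neg_iff[OF scale]
proof (intro allI)
  fix b j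
  obtain k A where "finite A" and kA: "\<forall>n. (\<forall>a\<in>A. ((\<lambda>e. p a (n e) / \<sigma> k e) \<longlongrightarrow> 0) (at_right 0)) \<longrightarrow>
      ((\<lambda>e. q b (T e (n e)) / \<sigma> j e) \<longlongrightarrow> 0) (at_right 0)"
    using T_negk[of b j] by blast
  show "((\<lambda>e. q b (T e (n e)) / \<sigma> j e) \<longlongrightarrow> 0) (at_right 0)"
    using kA assms unfolding neg_iff[OF scale] by blast
qed

lemma T_diff_neg:
  assumes "negligible p \<sigma> (\<lambda>e. g e - h e)"
  shows "negligible q \<sigma> (\<lambda>e. T e (g e) - T e (h e))"
proof (rule neg_cong[OF scale Y T_neg[OF assms]])
  show "\<forall>\<^sub>F e in at_right 0. T e (g e - h e) = T e (g e) - T e (h e)"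
    using ev01 by eventually_elim (simp add: module_hom.diff[OF mh])
qed

lemma part1:
  assumes h: "moderate p \<sigma> h"
  shows "moderate q \<sigma> (\<lambda>e. T e (h e)) \<and> gmap q \<sigma> T (gclass p \<sigma> h) = gclass q \<sigma> (\<lambda>e. T e (h e))"
proof
  show "moderate q \<sigma> (\<lambda>e. T e (h e))" using T_mod[OF h] .
  have "negligible p \<sigma> (\<lambda>e. rep (gclass p \<sigma> h) e - h e)" using gc_rep[OF scale X h] by blast
  from T_diff_neg[OF this] show "gmap q \<sigma> T (gclass p \<sigma> h) = gclass q \<sigma> (\<lambda>e. T e (h e))"
    unfolding gmap_def by (rule gc_eq[OF scale Y])
qed

lemma part2: "gmap q \<sigma> T ` gspace p \<sigma> \<subseteq> gspace q \<sigma>"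
proof
  fix D assume "D \<in> gmap q \<sigma> T ` gspace p \<sigma>"
  then obtain C where C: "C \<in> gspace p \<sigma>" "D = gmap q \<sigma> T C" by blast
  have "moderate p \<sigma> (rep C)" using gspace_E[OF scale X C(1)] by blast
  then show "D \<in> gspace q \<sigma>" unfolding C(2) gmap_def by (intro gclass_in_gspace[OF scale Y] T_mod)
qed

lemma gmap_rep:
  assumes "C \<in> gspace p \<sigma>"
  shows "moderate q \<sigma> (rep (gmap q \<sigma> T C)) \<and> rep (gmap q \<sigma> T C) \<in> gmap q \<sigma> T C \<and>
     negligible q \<sigma> (\<lambda>e. rep (gmap q \<sigma> T C) e - T e (rep C e))"
proof -
  have "moderate p \<sigma> (rep C)" using gspace_E[OF scale X assms] by blast
  then have "moderate q \<sigma> (\<lambda>e. T e (rep C e))" by (rule T_mod)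
  from gc_rep[OF scale Y this] rep_in[OF scale Y, of "gmap q \<sigma> T C"] gc_self[OF scale Y this]
  show ?thesis unfolding gmap_def by blast
qed


lemma part3:
  assumes c: "c \<in> gscalars \<sigma>" and C: "C \<in> gspace p \<sigma>" and D: "D \<in> gspace p \<sigma>"
  shows "gmap q \<sigma> T (gadd p \<sigma> (gscale sX p \<sigma> c C) D) =
          gadd q \<sigma> (gscale sY q \<sigma> c (gmap q \<sigma> T C)) (gmap q \<sigma> T D)"
proof -
  define rc where "rc = rep c"
  define rC where "rC = rep C"
  define rD where "rD = rep D"
  have mc: "moderate (\<lambda>_::unit. norm) \<sigma> rc"
    using gspace_E[OF scale lcs_scalar, of c] c unfolding rc_def gscalars_def by blast
  have mC: "moderate p \<sigma> rC" using gspace_E[OF scale X C] rC_def by blast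
  have mD: "moderate p \<sigma> rD" using gspace_E[OF scale X D] rD_def by blast
  define x1 where "x1 = (\<lambda>e. sX (rc e) (rC e))"
  have m1: "moderate p \<sigma> x1" unfolding x1_def by (rule mod_scal[OF scale X mc mC])
  define r1 where "r1 = rep (gscale sX p \<sigma> c C)"
  have gs1: "gscale sX p \<sigma> c C = gclass p \<sigma> x1" unfolding gscale_def x1_def rc_def rC_def ..
  have r1: "moderate p \<sigma> r1" "negligible p \<sigma> (\<lambda>e. r1 e - x1 e)"
    using gc_rep[OF scale X m1] unfolding r1_def gs1 by auto
  define x2 where "x2 = (\<lambda>e. r1 e + rD e)"
  have m2: "moderate p \<sigma> x2" unfolding x2_def by (rule mod_add[OF scale X r1(1) mD])
  have ga2: "gadd p \<sigma> (gscale sX p \<sigma> c C) D = gclass p \<sigma> x2" unfolding gadd_def x2_def r1_def rD_def ..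
  define r2 where "r2 = rep (gadd p \<sigma> (gscale sX p \<sigma> c C) D)"
  have r2: "negligible p \<sigma> (\<lambda>e. r2 e - x2 e)"
    using gc_rep[OF scale X m2] unfolding r2_def ga2 by auto
  have lhs: "gmap q \<sigma> T (gadd p \<sigma> (gscale sX p \<sigma> c C) D) = gclass q \<sigma> (\<lambda>e. T e (r2 e))"
    unfolding gmap_def r2_def ..
  define s1 where "s1 = rep (gmap q \<sigma> T C)"
  define s2 where "s2 = rep (gmap q \<sigma> T D)"
  have s1: "moderate q \<sigma> s1" "negligible q \<sigma> (\<lambda>e. s1 e - T e (rC e))"
    using gmap_rep[OF C] unfolding s1_def rC_def by auto
  have s2: "negligible q \<sigma> (\<lambda>e. s2 e - T e (rD e))"
    using gmap_rep[OF D] unfolding s2_def rD_def by auto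
  define y3 where "y3 = (\<lambda>e. sY (rc e) (s1 e))"
  have m3: "moderate q \<sigma> y3" unfolding y3_def by (rule mod_scal[OF scale Y mc s1(1)])
  have gs3: "gscale sY q \<sigma> c (gmap q \<sigma> T C) = gclass q \<sigma> y3" unfolding gscale_def y3_def rc_def s1_def ..
  define s3 where "s3 = rep (gscale sY q \<sigma> c (gmap q \<sigma> T C))"
  have s3: "negligible q \<sigma> (\<lambda>e. s3 e - y3 e)"
    using gc_rep[OF scale Y m3] unfolding s3_def gs3 by auto
  have rhs: "gadd q \<sigma> (gscale sY q \<sigma> c (gmap q \<sigma> T C)) (gmap q \<sigma> T D) = gclass q \<sigma> (\<lambda>e. s3 e + s2 e)"
    unfolding gadd_def s3_def s2_def ..
  have n1: "negligible q \<sigma> (\<lambda>e. T e (r2 e) - T e (x2 e))" by (rule T_diff_neg[OF r2])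
  have n2: "negligible q \<sigma> (\<lambda>e. T e (r1 e) - T e (x1 e))" by (rule T_diff_neg[OF r1(2)])
  have n4: "negligible q \<sigma> (\<lambda>e. sY (rc e) (s1 e - T e (rC e)))" by (rule neg_scal[OF scale Y mc s1(2)])
  have nsum: "negligible q \<sigma> (\<lambda>e. (T e (r2 e) - T e (x2 e)) + (T e (r1 e) - T e (x1 e))
      - (s3 e - y3 e) - sY (rc e) (s1 e - T e (rC e)) - (s2 e - T e (rD e)))"
    by (intro neg_diff[OF scale Y] neg_add[OF scale Y] n1 n2 s3 n4 s2)
  have "negligible q \<sigma> (\<lambda>e. T e (r2 e) - (s3 e + s2 e))"
  proof (rule neg_cong[OF scale Y nsum])
    show "\<forall>\<^sub>F e in at_right 0. (T e (r2 e) - T e (x2 e)) + (T e (r1 e) - T e (x1 e))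
      - (s3 e - y3 e) - sY (rc e) (s1 e - T e (rC e)) - (s2 e - T e (rD e)) = T e (r2 e) - (s3 e + s2 e)"
      using ev01
    proof eventually_elim
      case (elim e)
      have a: "T e (x2 e) = T e (r1 e) + T e (rD e)" unfolding x2_def by (rule module_hom.add[OF mh[OF elim]])
      have b: "T e (x1 e) = sY (rc e) (T e (rC e))" unfolding x1_def by (rule module_hom.scale[OF mh[OF elim]])
      have d: "sY (rc e) (s1 e - T e (rC e)) = sY (rc e) (s1 e) - sY (rc e) (T e (rC e))"
        by (rule module.scale_right_diff_distrib[OF lcs_module[OF Y]])
      show ?case unfolding a b d y3_def by (simp add: algebra_simps)
    qed
  qed
  then show ?thesis unfolding lhs rhs by (rule gc_eq[OF scale Y])
qed

lemma part4: "continuous_map (sharp_top p \<sigma>) (sharp_top q \<sigma>) (gmap q \<sigma> T)"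
  unfolding sharp_top_def[of q]
proof (rule continuous_on_generated_topo)
  show "gmap q \<sigma> T ` topspace (sharp_top p \<sigma>) \<subseteq> \<Union> {sharp_nbhd q \<sigma> C a l |C a l. C \<in> gspace q \<sigma>}"
  proof -
    have "\<Union> {sharp_nbhd q \<sigma> C a l |C a l. C \<in> gspace q \<sigma>} = gspace q \<sigma>"
      using topspace_sharp[OF scale Y] unfolding sharp_top_def topology_generated_by_topspace .
    then show ?thesis using part2 unfolding topspace_sharp[OF scale X] by simp
  qed
next
  fix U assume "U \<in> {sharp_nbhd q \<sigma> C a l |C a l. C \<in> gspace q \<sigma>}"
  then obtain E b j where E: "E \<in> gspace q \<sigma>" and U: "U = sharp_nbhd q \<sigma> E b j" by blast
  define W where "W = gmap q \<sigma> T -` U \<inter> topspace (sharp_top p \<sigma>)"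
  have W: "W = {C \<in> gspace p \<sigma>. gmap q \<sigma> T C \<in> U}"
    unfolding W_def topspace_sharp[OF scale X] by blast
  show "openin (sharp_top p \<sigma>) (gmap q \<sigma> T -` U \<inter> topspace (sharp_top p \<sigma>))"
    unfolding W_def[symmetric] openin_subopen[of _ W]
  proof
    fix C assume "C \<in> W"
    then have C: "C \<in> gspace p \<sigma>" and CU: "gmap q \<sigma> T C \<in> U" unfolding W by auto
    obtain y z where yz: "y \<in> E" "z \<in> gmap q \<sigma> T C" "(\<lambda>e. q b (z e - y e)) \<in> o[at_right 0](\<sigma> j)"
      using CU unfolding U sharp_nbhd_def by blast
    obtain k A where A: "finite A" and kA: "\<forall>n. (\<forall>a\<in>A. ((\<lambda>e. p a (n e) / \<sigma> k e) \<longlongrightarrow> 0) (at_right 0)) \<longrightarrow>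
      ((\<lambda>e. q b (T e (n e)) / \<sigma> j e) \<longlongrightarrow> 0) (at_right 0)"
      using T_negk[of b j] by blast
    define A' where "A' = insert undefined A"
    define V where "V = \<Inter> ((\<lambda>a. sharp_nbhd p \<sigma> C a k) ` A')"
    have "openin (sharp_top p \<sigma>) V"
      unfolding V_def using A nbhd_open[OF scale X C] by (intro openin_Inter) (auto simp: A'_def)
    moreover have "C \<in> V" unfolding V_def using self_nbhd[OF scale X C] by blast
    moreover have "V \<subseteq> W"
    proof
      fix D assume DV: "D \<in> V"
      then have DN: "\<And>a. a \<in> A' \<Longrightarrow> D \<in> sharp_nbhd p \<sigma> C a k" unfolding V_def by blast
      have "D \<in> sharp_nbhd p \<sigma> C undefined k" using DN by (simp add: A'_def)
      then have Dg: "D \<in> gspace p \<sigma>" unfolding sharp_nbhd_def by blast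
      have close: "((\<lambda>e. p a (rep D e - rep C e) / \<sigma> k e) \<longlongrightarrow> 0) (at_right 0)" if "a \<in> A" for a
        using nbhd_close[OF scale X C DN[of a]] that by (auto simp: A'_def)
      have t2: "((\<lambda>e. q b (T e (rep D e - rep C e)) / \<sigma> j e) \<longlongrightarrow> 0) (at_right 0)"
        using kA[rule_format, of "\<lambda>e. rep D e - rep C e"] close by simp
      define g where "g = rep (gmap q \<sigma> T D)"
      have g: "g \<in> gmap q \<sigma> T D" "negligible q \<sigma> (\<lambda>e. g e - T e (rep D e))"
        using gmap_rep[OF Dg] unfolding g_def by auto
      have t1: "((\<lambda>e. q b (g e - T e (rep D e)) / \<sigma> j e) \<longlongrightarrow> 0) (at_right 0)"
        using g(2) unfolding neg_iff[OF scale] by blast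
      have zC: "negligible q \<sigma> (\<lambda>e. z e - T e (rep C e))"
        using yz(2) unfolding gmap_def mem_gclass[OF scale Y] by simp
      have t3: "((\<lambda>e. q b (z e - T e (rep C e)) / \<sigma> j e) \<longlongrightarrow> 0) (at_right 0)"
        using zC unfolding neg_iff[OF scale] by blast
      have t4: "((\<lambda>e. q b (z e - y e) / \<sigma> j e) \<longlongrightarrow> 0) (at_right 0)"
        using yz(3) unfolding small_iff_k[OF scale Y] .
      have t: "((\<lambda>e. q b (g e - T e (rep D e)) / \<sigma> j e + q b (T e (rep D e - rep C e)) / \<sigma> j e
          + q b (z e - T e (rep C e)) / \<sigma> j e + q b (z e - y e) / \<sigma> j e) \<longlongrightarrow> 0) (at_right 0)"
        by (intro tendsto_add_zero t1 t2 t3 t4)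
      have "((\<lambda>e. q b (g e - y e) / \<sigma> j e) \<longlongrightarrow> 0) (at_right 0)"
      proof (rule sandwich0[OF _ t])
        show "\<forall>\<^sub>F e in at_right 0. 0 \<le> q b (g e - y e) / \<sigma> j e \<and> q b (g e - y e) / \<sigma> j e
           \<le> q b (g e - T e (rep D e)) / \<sigma> j e + q b (T e (rep D e - rep C e)) / \<sigma> j e
          + q b (z e - T e (rep C e)) / \<sigma> j e + q b (z e - y e) / \<sigma> j e"
          using ev01 sc_pos[OF scale, of j]
        proof eventually_elim
          case (elim e)
          have Td: "T e (rep D e - rep C e) = T e (rep D e) - T e (rep C e)"
            by (rule module_hom.diff[OF mh[OF elim(1)]])
          have "q b (g e - y e) \<le> q b (g e - T e (rep D e)) + q b (T e (rep D e) - y e)"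
            by (rule sn_diff_tri[OF Y])
          also have "q b (T e (rep D e) - y e) \<le> q b (T e (rep D e) - T e (rep C e)) + q b (T e (rep C e) - y e)"
            by (rule sn_diff_tri[OF Y])
          also have "q b (T e (rep C e) - y e) \<le> q b (T e (rep C e) - z e) + q b (z e - y e)"
            by (rule sn_diff_tri[OF Y])
          finally have "q b (g e - y e) \<le> q b (g e - T e (rep D e)) + q b (T e (rep D e - rep C e))
              + q b (z e - T e (rep C e)) + q b (z e - y e)"
            unfolding Td using sn_diff_sym[OF Y, of b "T e (rep C e)" "z e"] by simp
          then have "q b (g e - y e) / \<sigma> j e \<le> (q b (g e - T e (rep D e)) + q b (T e (rep D e - rep C e))
              + q b (z e - T e (rep C e)) + q b (z e - y e)) / \<sigma> j e"
            using elim by (intro divide_right_mono) auto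
          then show ?case using elim sn_nonneg[OF Y] by (simp add: add_divide_distrib)
        qed
      qed
      then have "(\<lambda>e. q b (g e - y e)) \<in> o[at_right 0](\<sigma> j)" unfolding small_iff_k[OF scale Y] .
      moreover have "gmap q \<sigma> T D \<in> gspace q \<sigma>" using part2 Dg by blast
      ultimately have "gmap q \<sigma> T D \<in> U"
        unfolding U sharp_nbhd_def using yz(1) g(1) by blast
      then show "D \<in> W" unfolding W using Dg by blast
    qed
    ultimately show "\<exists>V. openin (sharp_top p \<sigma>) V \<and> C \<in> V \<and> V \<subseteq> W" by blast
  qed
qed

end

theorem mainTheorem9:
  fixes sX :: "'f::real_normed_field \<Rightarrow> 'x::ab_group_add \<Rightarrow> 'x"
    and sY :: "'f \<Rightarrow> 'y::ab_group_add \<Rightarrow> 'y"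
    and p :: "'a \<Rightarrow> 'x \<Rightarrow> real" and q :: "'b \<Rightarrow> 'y \<Rightarrow> real"
    and prec :: "'l \<Rightarrow> 'l \<Rightarrow> bool" and \<sigma> :: "'l \<Rightarrow> real \<Rightarrow> real"
    and T :: "real \<Rightarrow> 'x \<Rightarrow> 'y"
  assumes scale: "asymptotic_scale prec \<sigma>"
    and X: "lcs sX p" and Y: "lcs sY q"
    and lin: "\<And>e. e \<in> {0<..<1} \<Longrightarrow> Vector_Spaces.linear sX sY (T e)"
    and cont: "\<And>e. e \<in> {0<..<1} \<Longrightarrow> continuous_map (lc_top p) (lc_top q) (T e)"
    and growth: "\<forall>b. \<exists>l A. finite A \<and>
        (\<forall>\<^sub>F e in at_right 0. bdd_above (op_seminorm p q (T e) b A)) \<and>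
        (\<lambda>e. \<sigma> l e * Sup (op_seminorm p q (T e) b A)) \<in> o[at_right 0](\<lambda>_. 1)"
  shows "(\<forall>h. moderate p \<sigma> h \<longrightarrow>
            moderate q \<sigma> (\<lambda>e. T e (h e)) \<and>
            gmap q \<sigma> T (gclass p \<sigma> h) = gclass q \<sigma> (\<lambda>e. T e (h e)))
     \<and> gmap q \<sigma> T ` gspace p \<sigma> \<subseteq> gspace q \<sigma>
     \<and> (\<forall>c\<in>gscalars \<sigma>. \<forall>C\<in>gspace p \<sigma>. \<forall>D\<in>gspace p \<sigma>.
          gmap q \<sigma> T (gadd p \<sigma> (gscale sX p \<sigma> c C) D) =
          gadd q \<sigma> (gscale sY q \<sigma> c (gmap q \<sigma> T C)) (gmap q \<sigma> T D))
     \<and> continuous_map (sharp_top p \<sigma>) (sharp_top q \<sigma>) (gmap q \<sigma> T)"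
proof -
  note P = part1[OF scale X Y lin growth] part2[OF scale X Y lin growth]
    part3[OF scale X Y lin growth] part4[OF scale X Y lin growth]
  show ?thesis using P by blast
qed

end
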